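(* Let $m\le n$ be positive integers, $\gamma,\tau,\delta>0$ with $\eta=\sqrt{\tau+\gamma}<1/2$, and let $\mathbf{A}$ be a random variable valued in $\mathbb{F}_2^{m\times n}$ with $H_\infty(\mathbf{A})\ge(1-\gamma)mn$. Then $$\Pr[\mathbf{A}\text{ is }(\tau,\delta)\text{-bad}]\le m\cdot 2^{-\tau n}+m\cdot\delta\cdot 2^{h(\eta)m}.$$
   Context: $h$ is the binary entropy function, $H_\infty(X)=-\log_2\max_x\Pr[X=x]$. For a matrix $A$, $A_i$ is its $i$-th row, $A_{[i]}$ its first $i$ rows. $p_i(A)=\Pr[\mathbf{A}_i=A_i\mid\mathbf{A}_{[i-1]}=A_{[i-1]}]$, $q_i(A)=-\log_2p_i(A)$; $A$ is $\tau$-rare if $p_i(A)<2^{-n(1+\tau)}$ for some $i$. Fix a function $B$ on $\mathrm{supp}(\mathbf{A})$: if $A$ is $\tau$-rare then $B(A)=\bot$; otherwise $B(A)$ is a (fixed choice of) subset $S\subseteq[m]$ with $|S|\le\eta m$ and $q_i(A)\ge(1-\eta)n$ for all $i\notin S$ (such $S$ exists). $A\in\mathrm{supp}(\mathbf{A})$ is $(\tau,\delta)$-bad if $A$ is $\tau$-rare, or there is $i\in[m]$ with $\Pr[B(\mathbf{A})=B(A)\mid\mathbf{A}_{[i-1]}=A_{[i-1]}]<\delta$. *)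

theory Defs
  imports "HOL-Probability.Probability"
begin

text \<open>Matrices over F_2 of size m x n are functions A :: nat => nat => bool
  (A i j = entry in row i, column j, True = 1), 0-indexed, with all entries
  outside {..<m} x {..<n} equal to False.\<close>

type_synonym mat2 = "nat \<Rightarrow> nat \<Rightarrow> bool"

definition f2_mats :: "nat \<Rightarrow> nat \<Rightarrow> mat2 set" where
  "f2_mats m n = {A. \<forall>i j. (m \<le> i \<or> n \<le> j) \<longrightarrow> \<not> A i j}"

definition bin_entropy :: "real \<Rightarrow> real" where
  "bin_entropy x = - x * log 2 x - (1 - x) * log 2 (1 - x)"

definition min_entropy :: "'a pmf \<Rightarrow> real" where
  "min_entropy P = - log 2 (SUP x. pmf P x)"

definition prefix_event :: "mat2 \<Rightarrow> nat \<Rightarrow> mat2 set" where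
  "prefix_event A i = {X. \<forall>j<i. X j = A j}"

definition cond_prob :: "'a pmf \<Rightarrow> 'a set \<Rightarrow> 'a set \<Rightarrow> real" where
  "cond_prob P E F = measure_pmf.prob P (E \<inter> F) / measure_pmf.prob P F"

definition p_row :: "mat2 pmf \<Rightarrow> mat2 \<Rightarrow> nat \<Rightarrow> real" where
  "p_row P A i = cond_prob P {X. X i = A i} (prefix_event A i)"

definition q_row :: "mat2 pmf \<Rightarrow> mat2 \<Rightarrow> nat \<Rightarrow> real" where
  "q_row P A i = - log 2 (p_row P A i)"

definition rare :: "mat2 pmf \<Rightarrow> nat \<Rightarrow> nat \<Rightarrow> real \<Rightarrow> mat2 \<Rightarrow> bool" where
  "rare P m n \<tau> A \<longleftrightarrow> (\<exists>i<m. p_row P A i < 2 powr (- (real n * (1 + \<tau>))))"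

text \<open>Admissible choice of the function B (None plays the role of bottom).\<close>
definition valid_B :: "mat2 pmf \<Rightarrow> nat \<Rightarrow> nat \<Rightarrow> real \<Rightarrow> real \<Rightarrow>
    (mat2 \<Rightarrow> nat set option) \<Rightarrow> bool" where
  "valid_B P m n \<tau> \<eta> B \<longleftrightarrow>
     (\<forall>A \<in> set_pmf P.
        (rare P m n \<tau> A \<longrightarrow> B A = None) \<and>
        (\<not> rare P m n \<tau> A \<longrightarrow>
           (\<exists>S. B A = Some S \<and> S \<subseteq> {..<m} \<and> real (card S) \<le> \<eta> * real m \<and>
                (\<forall>i<m. i \<notin> S \<longrightarrow> q_row P A i \<ge> (1 - \<eta>) * real n))))"

definition bad :: "mat2 pmf \<Rightarrow> nat \<Rightarrow> nat \<Rightarrow> real \<Rightarrow> real \<Rightarrow>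
    (mat2 \<Rightarrow> nat set option) \<Rightarrow> mat2 \<Rightarrow> bool" where
  "bad P m n \<tau> \<delta> B A \<longleftrightarrow> rare P m n \<tau> A \<or>
     (\<exists>i<m. cond_prob P {X. B X = B A} (prefix_event A i) < \<delta>)"

end

theory Submission
  imports Defs
begin

lemma measure_cond_pmf':
  assumes "set_pmf P \<inter> s \<noteq> {}"
  shows "measure (cond_pmf P s) A = measure P (s \<inter> A) / measure P s"
  using assms unfolding cond_pmf.rep_eq[OF assms]
  by (subst measure_uniform_measure) (auto simp: emeasure_measure_pmf_not_zero)

lemma cond_bound:
  fixes P :: "'a pmf" and f :: "'a \<Rightarrow> 'b" and c :: real
  assumes c: "c \<ge> 0"
    and H: "\<And>x. x \<in> set_pmf P \<Longrightarrow> measure (cond_pmf P {y. f y = f x}) S \<le> c"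
  shows "measure P S \<le> c"
proof -
  have eq: "bind_pmf (map_pmf f P) (\<lambda>v. cond_pmf P {y. f y = v}) = P"
    by (rule bind_cond_pmf_cancel) (auto simp: measure_map_pmf vimage_def)
  have "emeasure P S = emeasure (bind_pmf (map_pmf f P) (\<lambda>v. cond_pmf P {y. f y = v})) S"
    by (simp only: eq)
  also have "\<dots> = (\<integral>\<^sup>+v. emeasure (cond_pmf P {y. f y = v}) S \<partial>map_pmf f P)"
    by simp
  also have "\<dots> \<le> (\<integral>\<^sup>+v. ennreal c \<partial>map_pmf f P)"
  proof (rule nn_integral_mono_AE)
    show "AE v in measure_pmf (map_pmf f P). emeasure (cond_pmf P {y. f y = v}) S \<le> ennreal c"
      using H by (auto simp: AE_measure_pmf_iff measure_pmf.emeasure_eq_measure intro!: ennreal_leI)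
  qed
  also have "\<dots> = ennreal c" by simp
  finally show ?thesis
    using c by (simp add: measure_pmf.emeasure_eq_measure)
qed

lemma card_fam_bound:
  fixes \<eta> :: real and m :: nat
  assumes e0: "0 < \<eta>" and e1: "\<eta> < 1/2"
  shows "real (card {S. S \<subseteq> {..<m} \<and> real (card S) \<le> \<eta> * real m})
           \<le> 2 powr (bin_entropy \<eta> * real m)"
proof -
  define Fam where "Fam = {S. S \<subseteq> {..<m} \<and> real (card S) \<le> \<eta> * real m}"
  define r where "r = \<eta> / (1 - \<eta>)"
  define w where "w = (1 - \<eta>) ^ m * r powr (\<eta> * real m)"
  have r0: "0 < r" and r1: "r \<le> 1" using e0 e1 by (auto simp: r_def field_simps)
  have finF: "finite Fam" unfolding Fam_def
    by (rule finite_subset[of _ "Pow {..<m}"]) auto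
  have wle: "w \<le> \<eta> ^ card S * (1 - \<eta>) ^ (m - card S)" if "S \<in> Fam" for S
  proof -
    have cS: "card S \<le> m" "real (card S) \<le> \<eta> * real m"
      using that unfolding Fam_def by (auto dest: card_mono[rotated] simp: card_lessThan)
    have "\<eta> ^ card S * (1 - \<eta>) ^ (m - card S) = (1 - \<eta>) ^ m * r ^ card S"
    proof -
      have "(1 - \<eta>) ^ m = (1 - \<eta>) ^ (m - card S) * (1 - \<eta>) ^ card S"
        using cS(1) by (simp add: power_add[symmetric])
      then show ?thesis using e1 by (simp add: r_def power_divide field_simps)
    qed
    moreover have "r powr (\<eta> * real m) \<le> r ^ card S"
      using powr_mono'[OF cS(2), of r] r0 r1 by (simp add: powr_realpow)
    ultimately show ?thesis unfolding w_def using e1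
      by (simp add: mult_left_mono)
  qed
  have "real (card Fam) * w = (\<Sum>S\<in>Fam. w)" by simp
  also have "\<dots> \<le> (\<Sum>S\<in>Fam. \<eta> ^ card S * (1 - \<eta>) ^ (m - card S))"
    by (rule sum_mono) (rule wle)
  also have "\<dots> \<le> (\<Sum>S\<in>Pow {..<m}. \<eta> ^ card S * (1 - \<eta>) ^ (m - card S))"
    by (rule sum_mono2) (use e0 e1 in \<open>auto simp: Fam_def\<close>)
  also have "\<dots> = (\<Sum>S\<in>Pow {..<m}. (\<Prod>x\<in>S. \<eta>) * (\<Prod>x\<in>{..<m} - S. 1 - \<eta>))"
    by (rule sum.cong) (auto simp: card_Diff_subset finite_subset)
  also have "\<dots> = (\<Prod>x\<in>{..<m}. \<eta> + (1 - \<eta>))"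
    by (rule prod_add[symmetric]) simp
  also have "\<dots> = 1" by simp
  finally have A: "real (card Fam) * w \<le> 1" .
  have w_eq: "w = 2 powr (- (bin_entropy \<eta> * real m))"
  proof -
    have "(1 - \<eta>) ^ m = (1 - \<eta>) powr real m" using e1 by (simp add: powr_realpow)
    have "w = (1 - \<eta>) powr real m * (\<eta> powr (\<eta> * real m) / (1 - \<eta>) powr (\<eta> * real m))"
      unfolding w_def r_def using e0 e1 by (simp add: powr_realpow powr_divide)
    also have "\<dots> = \<eta> powr (\<eta> * real m) * (1 - \<eta>) powr ((1 - \<eta>) * real m)"
    proof -
      have "(1 - \<eta>) powr real m / (1 - \<eta>) powr (\<eta> * real m) = (1 - \<eta>) powr ((1 - \<eta>) * real m)"
        by (simp add: powr_diff[symmetric] algebra_simps)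
      then show ?thesis by (metis (no_types, lifting) times_divide_eq_right mult.commute)
    qed
    also have "\<dots> = (2 powr log 2 \<eta>) powr (\<eta> * real m) * (2 powr log 2 (1 - \<eta>)) powr ((1 - \<eta>) * real m)"
      using e0 e1 by simp
    also have "\<dots> = 2 powr (log 2 \<eta> * (\<eta> * real m) + log 2 (1 - \<eta>) * ((1 - \<eta>) * real m))"
      by (simp add: powr_powr powr_add)
    also have "\<dots> = 2 powr (- (bin_entropy \<eta> * real m))"
      by (simp add: bin_entropy_def algebra_simps)
    finally show ?thesis .
  qed
  have wpos: "w > 0" unfolding w_eq by simp
  have "real (card Fam) \<le> 1 / w" using A wpos by (simp add: field_simps)
  also have "1 / w = 2 powr (bin_entropy \<eta> * real m)"
    unfolding w_eq by (simp add: powr_minus divide_inverse)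
  finally show ?thesis unfolding Fam_def .
qed


lemma cond_prob_eq:
  assumes "y \<in> set_pmf P" "y \<in> s"
  shows "cond_prob P E s = measure (cond_pmf P s) E"
proof -
  have ne: "set_pmf P \<inter> s \<noteq> {}" using assms by auto
  show ?thesis unfolding cond_prob_def measure_cond_pmf'[OF ne] by (simp add: Int_commute)
qed

lemma small_pmf_bound:
  fixes Q :: "'a pmf"
  assumes "finite F" "set_pmf Q \<subseteq> F" "t \<ge> 0"
  shows "measure Q {r. pmf Q r < t} \<le> real (card F) * t"
proof -
  have "measure Q {r. pmf Q r < t} = measure Q ({r. pmf Q r < t} \<inter> set_pmf Q)"
    by (simp add: measure_Int_set_pmf)
  also have "\<dots> \<le> measure Q ({r. pmf Q r < t} \<inter> F)"
    by (rule measure_pmf.finite_measure_mono) (use assms(2) in auto)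
  also have "\<dots> = sum (pmf Q) ({r. pmf Q r < t} \<inter> F)"
    using assms(1) by (simp add: measure_measure_pmf_finite)
  also have "\<dots> \<le> sum (\<lambda>_. t) ({r. pmf Q r < t} \<inter> F)"
    by (rule sum_mono) auto
  also have "\<dots> \<le> sum (\<lambda>_. t) F"
    by (rule sum_mono2) (use assms in auto)
  finally show ?thesis by simp
qed

definition rows :: "nat \<Rightarrow> (nat \<Rightarrow> bool) set" where
  "rows n = {r. \<forall>j. n \<le> j \<longrightarrow> \<not> r j}"

lemma rows_card: "finite (rows n) \<and> card (rows n) = 2 ^ n"
proof -
  have eq: "rows n = (\<lambda>S j. j \<in> S) ` Pow {..<n}"
  proof (rule set_eqI, rule iffI)
    fix r assume "r \<in> rows n"
    then have "r = (\<lambda>j. j \<in> {j. r j})" "{j. r j} \<in> Pow {..<n}"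
      by (auto simp: rows_def) (meson not_le)
    then show "r \<in> (\<lambda>S j. j \<in> S) ` Pow {..<n}" by blast
  qed (auto simp: rows_def)
  have inj: "inj_on (\<lambda>S j. j \<in> S) (Pow {..<(n::nat)})"
    by (rule inj_onI) (metis Collect_mem_eq)
  show ?thesis unfolding eq using card_image[OF inj] by (simp add: card_Pow)
qed

definition pre :: "nat \<Rightarrow> mat2 \<Rightarrow> mat2" where
  "pre i X = (\<lambda>j. if j < i then X j else (\<lambda>_. False))"

lemma prefix_event_pre: "prefix_event A i = {y. pre i y = pre i A}"
  unfolding prefix_event_def pre_def by (auto simp: fun_eq_iff)

lemma rare_row_bound:
  assumes supp: "set_pmf P \<subseteq> f2_mats m n" and t: "t \<ge> 0"
  shows "measure P {A \<in> set_pmf P. p_row P A i < t} \<le> 2 ^ n * t"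
proof (rule cond_bound[where f = "pre i"])
  show "0 \<le> 2 ^ n * t" using t by simp
  fix x assume x: "x \<in> set_pmf P"
  define s where "s = {y. pre i y = pre i x}"
  define C where "C = cond_pmf P s"
  define Q where "Q = map_pmf (\<lambda>X. X i) C"
  have ne: "set_pmf P \<inter> s \<noteq> {}" using x by (auto simp: s_def)
  have setC: "set_pmf C = set_pmf P \<inter> s" unfolding C_def using ne by simp
  have pe: "\<And>y. y \<in> set_pmf C \<Longrightarrow> p_row P y i = pmf Q (y i)"
  proof -
    fix y assume y: "y \<in> set_pmf C"
    then have ps: "prefix_event y i = s" using setC by (auto simp: prefix_event_pre s_def)
    have "p_row P y i = measure C {X. X i = y i}"
      unfolding p_row_def ps C_def using y setC by (intro cond_prob_eq) auto
    also have "\<dots> = pmf Q (y i)" unfolding Q_def pmf_map by (simp add: vimage_def)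
    finally show "p_row P y i = pmf Q (y i)" .
  qed
  have "measure C {A \<in> set_pmf P. p_row P A i < t}
        = measure C ({A \<in> set_pmf P. p_row P A i < t} \<inter> set_pmf C)"
    by (simp add: measure_Int_set_pmf)
  also have "\<dots> \<le> measure C ((\<lambda>X. X i) -` {r. pmf Q r < t})"
    by (rule measure_pmf.finite_measure_mono) (auto simp: pe)
  also have "\<dots> = measure Q {r. pmf Q r < t}" unfolding Q_def by simp
  also have "\<dots> \<le> real (card (rows n)) * t"
  proof (rule small_pmf_bound)
    show "finite (rows n)" using rows_card by blast
    show "set_pmf Q \<subseteq> rows n"
      unfolding Q_def using setC supp by (auto simp: rows_def f2_mats_def)
  qed (use t in auto)
  also have "\<dots> = 2 ^ n * t" using rows_card by simp
  finally show "measure C {A \<in> set_pmf P. p_row P A i < t} \<le> 2 ^ n * t" .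
qed

lemma B_row_bound:
  fixes P :: "mat2 pmf" and B :: "mat2 \<Rightarrow> 'b"
  assumes d: "\<delta> \<ge> 0"
  shows "measure P {A \<in> set_pmf P. B A = b \<and> cond_prob P {X. B X = b} (prefix_event A i) < \<delta>} \<le> \<delta>"
proof (rule cond_bound[where f = "pre i"])
  show "0 \<le> \<delta>" using d .
  fix x assume x: "x \<in> set_pmf P"
  define s where "s = {y. pre i y = pre i x}"
  define C where "C = cond_pmf P s"
  define T where "T = {A \<in> set_pmf P. B A = b \<and> cond_prob P {X. B X = b} (prefix_event A i) < \<delta>}"
  have ne: "set_pmf P \<inter> s \<noteq> {}" using x by (auto simp: s_def)
  have setC: "set_pmf C = set_pmf P \<inter> s" unfolding C_def using ne by simp
  have pe: "\<And>y. y \<in> set_pmf C \<Longrightarrow> cond_prob P {X. B X = b} (prefix_event y i) = measure C {X. B X = b}"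
  proof -
    fix y assume y: "y \<in> set_pmf C"
    then have ps: "prefix_event y i = s" using setC by (auto simp: prefix_event_pre s_def)
    show "cond_prob P {X. B X = b} (prefix_event y i) = measure C {X. B X = b}"
      unfolding ps C_def using y setC by (intro cond_prob_eq) auto
  qed
  show "measure C T \<le> \<delta>"
  proof (cases "measure C {X. B X = b} < \<delta>")
    case True
    have "measure C T \<le> measure C {X. B X = b}"
      by (rule measure_pmf.finite_measure_mono) (unfold T_def, blast, simp)
    then show ?thesis using True by simp
  next
    case False
    have "T \<inter> set_pmf C = {}"
    proof (rule equals0I)
      fix y assume y: "y \<in> T \<inter> set_pmf C"
      then have "cond_prob P {X. B X = b} (prefix_event y i) < \<delta>" unfolding T_def by blast
      with pe[of y] y False show False by simp
    qed
    then have "measure C T = 0" using measure_Int_set_pmf[of C T] by simp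
    then show ?thesis using d by simp
  qed
qed


theorem lemmaG7:
  fixes m n :: nat and \<gamma> \<tau> \<delta> \<eta> :: real
    and P :: "mat2 pmf" and B :: "mat2 \<Rightarrow> nat set option"
  assumes "0 < m" and "m \<le> n"
    and "\<gamma> > 0" and "\<tau> > 0" and "\<delta> > 0"
    and "\<eta> = sqrt (\<tau> + \<gamma>)" and "\<eta> < 1/2"
    and "set_pmf P \<subseteq> f2_mats m n"
    and "min_entropy P \<ge> (1 - \<gamma>) * real m * real n"
    and "valid_B P m n \<tau> \<eta> B"
  shows "measure_pmf.prob P {A \<in> set_pmf P. bad P m n \<tau> \<delta> B A}
           \<le> real m * 2 powr (- \<tau> * real n) + real m * \<delta> * 2 powr (bin_entropy \<eta> * real m)"
proof -
  note supp = assms(8) and vB = assms(10)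
  have e0: "0 < \<eta>" using assms(3,4,6) by simp
  define t :: real where "t = 2 powr (- (real n * (1 + \<tau>)))"
  define R where "R i = {A \<in> set_pmf P. p_row P A i < t}" for i
  define T where "T i S = {A \<in> set_pmf P. B A = Some S \<and>
      cond_prob P {X. B X = Some S} (prefix_event A i) < \<delta>}" for i S
  define Fam where "Fam = {S. S \<subseteq> {..<m} \<and> real (card S) \<le> \<eta> * real m}"
  have finF: "finite Fam" unfolding Fam_def
    by (rule finite_subset[of _ "Pow {..<m}"]) auto
  have sub: "{A \<in> set_pmf P. bad P m n \<tau> \<delta> B A}
      \<subseteq> (\<Union>i\<in>{..<m}. R i) \<union> (\<Union>p\<in>{..<m} \<times> Fam. T (fst p) (snd p))"
  proof
    fix A assume A: "A \<in> {A \<in> set_pmf P. bad P m n \<tau> \<delta> B A}"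
    then have As: "A \<in> set_pmf P" and Ab: "bad P m n \<tau> \<delta> B A" by auto
    show "A \<in> (\<Union>i\<in>{..<m}. R i) \<union> (\<Union>p\<in>{..<m} \<times> Fam. T (fst p) (snd p))"
    proof (cases "rare P m n \<tau> A")
      case True
      then obtain i where "i < m" "p_row P A i < t" unfolding rare_def t_def by auto
      then show ?thesis using As unfolding R_def by auto
    next
      case False
      with vB As obtain S where S: "B A = Some S" "S \<subseteq> {..<m}" "real (card S) \<le> \<eta> * real m"
        unfolding valid_B_def by blast
      from Ab False obtain i where i: "i < m" "cond_prob P {X. B X = B A} (prefix_event A i) < \<delta>"
        unfolding bad_def by blast
      have "A \<in> T i S" unfolding T_def using As S i by simp
      moreover have "(i, S) \<in> {..<m} \<times> Fam" using i S unfolding Fam_def by simp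
      ultimately show ?thesis by force
    qed
  qed
  have "measure P {A \<in> set_pmf P. bad P m n \<tau> \<delta> B A}
      \<le> measure P ((\<Union>i\<in>{..<m}. R i) \<union> (\<Union>p\<in>{..<m} \<times> Fam. T (fst p) (snd p)))"
    by (rule measure_pmf.finite_measure_mono[OF sub]) simp
  also have "\<dots> \<le> measure P (\<Union>i\<in>{..<m}. R i) + measure P (\<Union>p\<in>{..<m} \<times> Fam. T (fst p) (snd p))"
    by (rule measure_Un_le) simp_all
  also have "measure P (\<Union>i\<in>{..<m}. R i) \<le> (\<Sum>i\<in>{..<m}. measure P (R i))"
    by (rule measure_UNION_le) simp_all
  also have "\<dots> \<le> (\<Sum>i\<in>{..<m}. 2 ^ n * t)"
    by (rule sum_mono) (unfold R_def, rule rare_row_bound[OF supp], simp add: t_def)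
  also have "\<dots> = real m * 2 powr (- \<tau> * real n)"
  proof -
    have "(2::real) ^ n * t = 2 powr real n * 2 powr (- (real n * (1 + \<tau>)))"
      by (simp add: t_def powr_realpow)
    also have "\<dots> = 2 powr (- \<tau> * real n)"
      by (simp add: powr_add[symmetric] algebra_simps)
    finally show ?thesis by simp
  qed
  also have "measure P (\<Union>p\<in>{..<m} \<times> Fam. T (fst p) (snd p))
      \<le> (\<Sum>p\<in>{..<m} \<times> Fam. measure P (T (fst p) (snd p)))"
    by (rule measure_UNION_le) (simp_all add: finF)
  also have "\<dots> \<le> (\<Sum>p\<in>{..<m} \<times> Fam. \<delta>)"
    by (rule sum_mono) (unfold T_def, rule B_row_bound, use assms(5) in simp)
  also have "\<dots> = real m * \<delta> * real (card Fam)"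
    by (simp add: card_cartesian_product)
  also have "\<dots> \<le> real m * \<delta> * 2 powr (bin_entropy \<eta> * real m)"
    unfolding Fam_def
    by (rule mult_left_mono[OF card_fam_bound[OF e0 assms(7)]]) (use assms(5) in simp)
  finally show ?thesis by simp
qed

end
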